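(* There is a constant $K_0>1$ such that for every fixed $K\ge K_0$ there is a constant $a=a(K)>0$ with the following property: for all $0<r\le\sqrt2$, setting $d=K\max(r,1/\sqrt2)$, we have $A(d,r)\ge a\,r^5$.
   Context: $B(z,\rho)$ denotes the closed Euclidean ball in $\mathbb{R}^2$. For $x,y\in\mathbb{R}^2$ and $r>0$, $W(x,y;r):=\{z\in\mathbb{R}^2: B(z,r)\supseteq B(x,r)\cap B(y,\|x-y\|)\}$. Its area depends only on $\|x-y\|$ and $r$; $A(d,r)$ denotes the area of $W(x,y;r)$ for any $x,y$ with $\|x-y\|=d$. *)

theory Defs
  imports "HOL-Analysis.Analysis"
begin

definition W :: "real^2 \<Rightarrow> real^2 \<Rightarrow> real \<Rightarrow> (real^2) set" where
  "W x y r = {z. cball x r \<inter> cball y (dist x y) \<subseteq> cball z r}"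

text \<open>A(d,r): area of W(x,y;r) for any x,y with |x-y| = d (independent of the choice).
  The theorem is stated for all such x,y, so no representative is fixed here.\<close>

end

theory Submission
  imports Defs
begin


lemma key:
  fixes r d al be rho g h :: real
  assumes r: "0 < r" "r \<le> d" and rho: "0 \<le> rho" "rho \<le> r" and g: "rho^2 \<le> 2*g"
    and h: "\<bar>h\<bar> \<le> rho*d" and al: "r^2/(4*d^2) \<le> al" "al \<le> r^2/(2*d^2)"
    and be: "\<bar>be\<bar> \<le> r^3/(32*d^3)"
  shows "rho^2 - 2*al*g - 2*be*h + (al^2+be^2)*d^2 \<le> r^2"
proof -
  have d: "d > 0" using r by linarith
  define c where "c = r/d"
  have rc: "r = c*d" using d by (simp add: c_def)
  have c0: "0 < c" using r d by (simp add: c_def)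
  have c1: "c \<le> 1" using r d by (simp add: c_def)
  have e1: "r^2/(4*d^2) = c^2/4" "r^2/(2*d^2) = c^2/2" "r^3/(32*d^3) = c^3/32"
    by (simp_all add: c_def power_divide)
  have alk: "al \<le> c^2/2" "c^2/4 \<le> al" using al e1 by simp_all
  have bec: "\<bar>be\<bar> \<le> c^3/32" using be e1 by simp
  have al0: "0 \<le> al" using alk zero_le_power2[of c] by linarith
  have s1: "al*rho^2 \<le> 2*al*g" using mult_left_mono[OF g al0] by (simp add: algebra_simps)
  have s2: "- (be*h) \<le> \<bar>be\<bar>*(rho*d)"
    using h abs_mult[of be h] mult_left_mono[OF h abs_ge_zero[of be]] by (smt (verit))
  have s3: "\<bar>be\<bar>*(rho*d) \<le> (c^3/32)*(c*d*d)"
    using bec rho d rc c0 by (intro mult_mono) auto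
  have c2: "c^2 \<le> 1" using c0 c1 by (simp add: power_le_one)
  have s4: "rho^2*(1-al) \<le> (c*d)^2*(1-al)" using rho alk c1 rc c2
    by (intro mult_right_mono power_mono) (auto simp: power_le_one)
  have s5: "al^2 \<le> al*(c^2/2)" using mult_left_mono[OF alk(1) al0] by (simp add: power2_eq_square)
  have s6: "be^2 \<le> (c^3/32)^2" using bec by (metis abs_ge_zero power2_abs power_mono)
  have c64: "c^6 \<le> c^4" using c0 c1 by (simp add: power_decreasing)
  have c4: "c^4 = c^2*c^2" by (simp add: power_add[symmetric])
  have lhs: "rho^2 - 2*al*g - 2*be*h + (al^2+be^2)*d^2 \<le>
     (c*d)^2*(1-al) + 2*((c^3/32)*(c*d*d)) + al*(c^2/2)*d^2 + (c^3/32)^2*d^2"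
  proof -
    have a: "al^2*d^2 \<le> al*(c^2/2)*d^2" using mult_right_mono[OF s5 zero_le_power2] .
    have b: "be^2*d^2 \<le> (c^3/32)^2*d^2" using mult_right_mono[OF s6 zero_le_power2] .
    have e: "rho^2 - al*rho^2 = rho^2*(1-al)" by (simp add: algebra_simps)
    show ?thesis using s1 s2 s3 s4 a b e by (simp only: distrib_right)
  qed
  have rhs: "(c*d)^2*(1-al) + 2*((c^3/32)*(c*d*d)) + al*(c^2/2)*d^2 + (c^3/32)^2*d^2
      = c^2*d^2 - (al*c^2/2)*d^2 + (c^4/16 + c^6/1024)*d^2"
    by (simp add: field_simps eval_nat_numeral)
  have fin: "- (al*c^2/2)*d^2 + (c^4/16 + c^6/1024)*d^2 \<le> 0"
  proof -
    have m: "c^2/4*c^2 \<le> al*c^2" using mult_right_mono[OF alk(2) zero_le_power2[of c]] .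
    have "c^2/4*c^2 = c^4/4" by (simp add: eval_nat_numeral)
    hence "al*c^2/2 \<ge> c^4/8" using m by linarith
    hence "c^4/16 + c^6/1024 - al*c^2/2 \<le> 0" using c64 zero_le_power[of c 4] c0 by linarith
    hence "(c^4/16 + c^6/1024 - al*c^2/2)*d^2 \<le> 0" by (simp add: mult_nonpos_nonneg)
    thus ?thesis by (simp add: algebra_simps)
  qed
  show ?thesis using lhs rhs fin rc by (simp add: power_mult_distrib)
qed



definition LL :: "real^2 \<Rightarrow> real^2 \<Rightarrow> real^2" where
  "LL D v = (v$1) *\<^sub>R D + (v$2) *\<^sub>R (vector [-(D$2), D$1])"

lemma LL_linear: "linear (LL D)"
  unfolding LL_def by (auto intro!: linearI simp: algebra_simps)

lemma det_LL: "det (matrix (LL D)) = (D$1)^2 + (D$2)^2"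
  by (simp add: det_2 matrix_def LL_def axis_def power2_eq_square)

lemma meas_box:
  assumes "a$1 \<le> b$1" "a$2 \<le> b$2"
  shows "measure lebesgue ((\<lambda>v. x + LL D v) ` cbox a b) = ((D$1)^2 + (D$2)^2) * ((b$1 - a$1) * (b$2 - a$2))"
proof -
  have "(\<lambda>v. x + LL D v) ` cbox a b = (+) x ` (LL D ` cbox a b)" by auto
  hence "measure lebesgue ((\<lambda>v. x + LL D v) ` cbox a b) = measure lebesgue (LL D ` cbox a b)"
    by (simp add: measure_translation)
  also have "\<dots> = \<bar>det (matrix (LL D))\<bar> * measure lebesgue (cbox a b)"
    by (rule measure_linear_image[OF LL_linear]) simp
  also have "measure lebesgue (cbox a b) = (b$1 - a$1) * (b$2 - a$2)"
  proof -
    have "a \<in> cbox a b" using assms by (simp add: mem_box_cart forall_2)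
    hence "cbox a b \<noteq> {}" by blast
    thus ?thesis by (simp add: content_cbox_cart UNIV_2)
  qed
  finally show ?thesis by (simp add: det_LL)
qed


lemma W_closed: "closed (W x y r)"
proof -
  have "W x y r = (\<Inter>p\<in>cball x r \<inter> cball y (dist x y). cball p r)"
    unfolding W_def by (auto simp: dist_commute)
  thus ?thesis by (simp add: closed_INT)
qed

lemma W_bounded: assumes "0 \<le> r" shows "bounded (W x y r)"
proof -
  have "W x y r \<subseteq> cball x r"
  proof
    fix z assume "z \<in> W x y r"
    moreover have "x \<in> cball x r \<inter> cball y (dist x y)" using assms by (simp add: dist_commute)
    ultimately have "x \<in> cball z r" unfolding W_def by blast
    thus "z \<in> cball x r" by (simp add: dist_commute)
  qed
  thus ?thesis using bounded_cball bounded_subset by blast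
qed

lemma W_lmeas: "0 \<le> r \<Longrightarrow> W x y r \<in> lmeasurable"
  by (intro lmeasurable_compact) (simp add: compact_eq_bounded_closed W_closed W_bounded)

lemma E_props:
  fixes D :: "real^2"
  defines "E \<equiv> vector [-(D$2), D$1] :: real^2"
  shows "inner E E = inner D D" "inner D E = 0"
  unfolding E_def by (simp_all add: inner_vec_def sum_2 algebra_simps)


lemma expand_inner:
  fixes D E q :: "real^2"
  assumes DD: "inner D D = d^2" and EE: "inner E E = d^2" and DE: "inner D E = 0"
  shows "inner ((al *\<^sub>R D + be *\<^sub>R E) - q) ((al *\<^sub>R D + be *\<^sub>R E) - q) = inner q q - 2*al*inner D q - 2*be*inner E q + (al^2+be^2)*d^2"
proof -
  have ED: "inner E D = 0" using DE by (simp add: inner_commute)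
  have ww: "inner (al *\<^sub>R D + be *\<^sub>R E) (al *\<^sub>R D + be *\<^sub>R E) = (al^2+be^2)*d^2"
    by (simp only: inner_add_left inner_add_right inner_scaleR_left inner_scaleR_right DD EE DE ED)
       (simp add: power2_eq_square algebra_simps)
  have wq: "inner (al *\<^sub>R D + be *\<^sub>R E) q = al*inner D q + be*inner E q"
    by (simp only: inner_add_left inner_scaleR_left)
  have "inner ((al *\<^sub>R D + be *\<^sub>R E) - q) ((al *\<^sub>R D + be *\<^sub>R E) - q)
     = inner (al *\<^sub>R D + be *\<^sub>R E) (al *\<^sub>R D + be *\<^sub>R E) - 2 * inner (al *\<^sub>R D + be *\<^sub>R E) q + inner q q"
    by (simp only: inner_diff_left inner_diff_right inner_commute[of q "al *\<^sub>R D + be *\<^sub>R E"])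
  thus ?thesis using ww wq by simp
qed

lemma contain:
  fixes x y :: "real^2" and r :: real
  assumes r: "0 < r" "r \<le> dist x y"
    and v1: "r^2/(4*(dist x y)^2) \<le> v$1" "v$1 \<le> r^2/(2*(dist x y)^2)"
    and v2: "\<bar>v$2\<bar> \<le> r^3/(32*(dist x y)^3)"
  shows "x + LL (y - x) v \<in> W x y r"
  unfolding W_def
proof (clarify)
  fix p assume px: "p \<in> cball x r" and py: "p \<in> cball y (dist x y)"
  define D where "D = y - x"
  define E where "E = (vector [-(D$2), D$1] :: real^2)"
  define d where "d = dist x y"
  define q where "q = p - x"
  define al where "al = v$1"
  define be where "be = v$2"
  have dD: "d = norm D" by (simp add: d_def D_def dist_norm norm_minus_commute)
  have DD: "inner D D = d^2" by (simp add: dD power2_norm_eq_inner)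
  have EE: "inner E E = d^2" using E_props(1)[of D] DD by (simp add: E_def)
  have DE: "inner D E = 0" using E_props(2)[of D] by (simp add: E_def)
  have nE: "norm E = d" using EE dD by (metis norm_eq_sqrt_inner real_sqrt_abs abs_norm_cancel)
  have z: "x + LL (y - x) v - p = (al *\<^sub>R D + be *\<^sub>R E) - q"
    by (simp add: LL_def D_def E_def al_def be_def q_def algebra_simps)
  have rho: "0 \<le> norm q" "norm q \<le> r" using px by (auto simp: q_def dist_norm norm_minus_commute)
  have "norm (q - D) \<le> d" using py by (simp add: q_def D_def d_def dist_norm norm_minus_commute)
  hence "(norm (q - D))^2 \<le> d^2" by (simp add: power_mono)
  hence "inner q q - 2 * inner D q + inner D D \<le> d^2"
    by (simp add: power2_norm_eq_inner inner_diff algebra_simps inner_commute)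
  hence g: "(norm q)^2 \<le> 2 * inner D q" using DD by (simp add: power2_norm_eq_inner)
  have h: "\<bar>inner E q\<bar> \<le> norm q * d" using Cauchy_Schwarz_ineq2[of E q] nE by (simp add: mult.commute)
  have expand: "(norm ((al *\<^sub>R D + be *\<^sub>R E) - q))^2
      = (norm q)^2 - 2*al*inner D q - 2*be*inner E q + (al^2+be^2)*d^2"
  proof -
    have "(norm ((al *\<^sub>R D + be *\<^sub>R E) - q))^2 = inner ((al *\<^sub>R D + be *\<^sub>R E) - q) ((al *\<^sub>R D + be *\<^sub>R E) - q)"
      by (rule power2_norm_eq_inner)
    also have "\<dots> = inner q q - 2*al*inner D q - 2*be*inner E q + (al^2+be^2)*d^2"
      by (rule expand_inner[OF DD EE DE])
    also have "inner q q = (norm q)^2" by (rule power2_norm_eq_inner[symmetric])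
    finally show ?thesis .
  qed
  have "(norm ((al *\<^sub>R D + be *\<^sub>R E) - q))^2 \<le> r^2"
    unfolding expand
  proof -
    have rd: "r \<le> d" using r(2) unfolding d_def .
    have a1: "r^2/(4*d^2) \<le> al" "al \<le> r^2/(2*d^2)" using v1 unfolding d_def al_def by auto
    have b1: "\<bar>be\<bar> \<le> r^3/(32*d^3)" using v2 unfolding d_def be_def .
    show "(norm q)^2 - 2*al*inner D q - 2*be*inner E q + (al^2+be^2)*d^2 \<le> r^2"
      by (rule key[OF r(1) rd rho g h a1 b1])
  qed
  hence nr: "norm ((al *\<^sub>R D + be *\<^sub>R E) - q) \<le> r" using r(1) by (rule power2_le_imp_le[OF _ less_imp_le])
  have "dist (x + LL (y - x) v) p = norm ((al *\<^sub>R D + be *\<^sub>R E) - q)" unfolding dist_norm z ..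
  thus "p \<in> cball (x + LL (y - x) v) r" using nr by simp
qed


lemma normsq2: "(D$1)^2 + (D$2)^2 = (norm (D::real^2))^2"
  unfolding power2_norm_eq_inner by (simp add: inner_vec_def sum_2 power2_eq_square)

lemma main_fixed:
  fixes K r :: real and x y :: "real^2"
  assumes K: "K \<ge> 2" and r: "0 < r" "r \<le> sqrt 2" and d: "dist x y = K * max r (1 / sqrt 2)"
  shows "measure lebesgue (W x y r) \<ge> (1/(192*K^3)) * r ^ 5"
proof -
  define d where "d = dist x y"
  have mpos: "max r (1/sqrt 2) \<ge> r" by simp
  have rd: "r \<le> d" unfolding d_def d using K r mpos
    by (smt (verit) mult_le_cancel_right1 mult_right_mono)
  have dpos: "0 < d" using rd r by linarith
  have s2: "1/sqrt 2 \<le> sqrt 2" by (simp add: divide_le_eq)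
  have mle: "max r (1/sqrt 2) \<le> sqrt 2" using r s2 by simp
  have dle: "d \<le> K * sqrt 2" unfolding d_def d using mle K by (simp add: mult_left_mono)
  have sq: "sqrt 2 \<le> 3/2" by (rule power2_le_imp_le) (auto simp: power2_eq_square)
  have d3: "d^3 \<le> (K* sqrt 2)^3" using dle dpos by (simp add: power_mono)
  have "(K* sqrt 2)^3 = K^3 * (2 * sqrt 2)" by (simp add: power_mult_distrib power3_eq_cube)
  also have "\<dots> \<le> K^3 * 3" using sq K by (intro mult_left_mono) auto
  finally have d3': "d^3 \<le> 3*K^3" using d3 by linarith
  define av where "av = (vector [r^2/(4*d^2), -(r^3/(32*d^3))] :: real^2)"
  define bv where "bv = (vector [r^2/(2*d^2), r^3/(32*d^3)] :: real^2)"
  define S where "S = (\<lambda>v. x + LL (y - x) v) ` cbox av bv"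
  have ab1: "av$1 \<le> bv$1" unfolding av_def bv_def using dpos by (simp add: frac_le)
  have ab2: "av$2 \<le> bv$2" unfolding av_def bv_def using dpos r by simp
  have mS: "measure lebesgue S = d^2 * ((r^2/(2*d^2) - r^2/(4*d^2)) * (r^3/(32*d^3) - -(r^3/(32*d^3))))"
  proof -
    have mb: "measure lebesgue S = (norm (y-x))^2 * ((bv$1 - av$1) * (bv$2 - av$2))"
      unfolding S_def using meas_box[OF ab1 ab2, of x "y - x"] unfolding normsq2 .
    have "norm (y - x) = d" by (simp add: d_def dist_norm norm_minus_commute)
    thus ?thesis using mb by (simp add: av_def bv_def)
  qed
  have mS': "measure lebesgue S = r^5/(64*d^3)"
    unfolding mS using dpos by (simp add: field_simps eval_nat_numeral)
  have sub: "S \<subseteq> W x y r"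
  proof
    fix z assume "z \<in> S"
    then obtain v where v: "v \<in> cbox av bv" and z: "z = x + LL (y - x) v" unfolding S_def by blast
    have v1: "av$1 \<le> v$1" "v$1 \<le> bv$1" "av$2 \<le> v$2" "v$2 \<le> bv$2" using v by (simp_all add: mem_box_cart)
    show "z \<in> W x y r" unfolding z
      by (rule contain[OF r(1) rd[unfolded d_def]]) (use v1 in \<open>simp_all add: av_def bv_def d_def abs_le_iff\<close>)
  qed
  have cont: "continuous_on (cbox av bv) (\<lambda>v. x + LL (y - x) v)"
    by (intro continuous_intros linear_continuous_on) (use LL_linear linear_conv_bounded_linear in blast)
  have "compact S" unfolding S_def by (intro compact_continuous_image cont compact_cbox)
  hence Sm: "S \<in> sets lebesgue" using lmeasurable_compact fmeasurableD by blast
  have "measure lebesgue S \<le> measure lebesgue (W x y r)"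
    by (rule measure_mono_fmeasurable[OF sub Sm W_lmeas]) (use r in simp)
  moreover have "(1/(192*K^3)) * r ^ 5 \<le> r^5/(64*d^3)"
  proof -
    have "64*d^3 \<le> 192*K^3" using d3' by linarith
    moreover have "0 < 64*d^3" using dpos by simp
    ultimately have "r^5/(192*K^3) \<le> r^5/(64*d^3)" using r K by (intro divide_left_mono) (auto simp: zero_less_mult_iff)
    thus ?thesis by simp
  qed
  ultimately show ?thesis using mS' by linarith
qed

theorem mainTheorem11:
  shows "\<exists>K0::real. K0 > 1 \<and>
    (\<forall>K\<ge>K0. \<exists>a::real. a > 0 \<and>
      (\<forall>r::real. 0 < r \<and> r \<le> sqrt 2 \<longrightarrow>
        (\<forall>x y :: real^2. dist x y = K * max r (1 / sqrt 2) \<longrightarrow>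
           measure lebesgue (W x y r) \<ge> a * r ^ 5)))"
proof (rule exI[of _ 2], intro conjI allI impI)
  show "(2::real) > 1" by simp
next
  fix K :: real assume K: "2 \<le> K"
  show "\<exists>a::real. a > 0 \<and>
      (\<forall>r::real. 0 < r \<and> r \<le> sqrt 2 \<longrightarrow>
        (\<forall>x y :: real^2. dist x y = K * max r (1 / sqrt 2) \<longrightarrow>
           measure lebesgue (W x y r) \<ge> a * r ^ 5))"
    using K main_fixed[OF K] by (intro exI[of _ "1/(192*K^3)"]) auto
qed

end
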